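(* Let $\{f_n\}_{n\ge 0}$ be the Fine numbers, determined by $f_0=1$, $f_1=0$ and $2(n+1)f_n=(7n-5)f_{n-1}+2(2n-1)f_{n-2}$ for $n\ge 2$. Then the sequence $\{f_n\}_{n\ge 2}$ is log-convex.
   Context: The Fine number $f_n$ counts Dyck paths from $(0,0)$ to $(2n,0)$ with no hills; the recurrence given determines them ($f_2=1,f_3=2,f_4=6,f_5=18,\dots$). A sequence $a_0,a_1,\ldots$ of nonnegative real numbers is log-convex if $a_{k-1}a_{k+1}\ge a_k^2$ for all $k\ge 1$. *)

theory Defs
  imports Complex_Main
begin

fun fine :: "nat \<Rightarrow> real" where
  "fine 0 = 1"
| "fine (Suc 0) = 0"
| "fine (Suc (Suc m)) =
     ((7 * real (m + 2) - 5) * fine (Suc m) + 2 * (2 * real (m + 2) - 1) * fine m)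
       / (2 * (real (m + 2) + 1))"

lemma fine_recurrence:
  assumes "n \<ge> 2"
  shows "2 * (real n + 1) * fine n
           = (7 * real n - 5) * fine (n - 1) + 2 * (2 * real n - 1) * fine (n - 2)"
proof -
  obtain m where n: "n = Suc (Suc m)" using assms by (metis add_2_eq_Suc le_Suc_ex)
  show ?thesis unfolding n by (simp add: field_simps)
qed

end

theory Submission
  imports Defs
begin

lemma step_alg:
  fixes x a b c :: real
  assumes x: "x \<ge> 0" and apos: "a > 0" and h1: "2*(2*x+1)*a \<le> (x+2)*b" and h2: "(x+3)*b \<le> 2*(2*x+3)*a"
    and c: "c = ((7*x+9)*b + 2*(2*x+3)*a) / (2*(x+3))"
  shows "2*(2*x+3)*b \<le> (x+3)*c" "(x+4)*c \<le> 2*(2*x+5)*b"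
proof -
  have cc: "2*(x+3)*c = (7*x+9)*b + 2*(2*x+3)*a" using c x by (simp add: field_simps)
  have e1: "2*(x+3)*c = 2*((x+3)*c)" by simp
  have e2: "2*(2*x+3)*a = 2*((2*x+3)*a)" by simp
  have e3: "(7*x+9)*b + (x+3)*b = 2*(2*(2*x+3)*b)" by (simp add: algebra_simps)
  show "2*(2*x+3)*b \<le> (x+3)*c" using cc h2 e1 e2 e3 by linarith
  have m: "2*(2*x+3)*(x+4)*(2*(2*x+1)*a) \<le> 2*(2*x+3)*(x+4)*((x+2)*b)"
    using h1 x by (intro mult_left_mono) auto
  have e: "2*(x+3)*(2*x+1)*((x+4)*c) = (x+4)*(2*x+1)*((7*x+9)*b + 2*(2*x+3)*a)"
  proof -
    have "2*(x+3)*(2*x+1)*((x+4)*c) = (x+4)*(2*x+1)*(2*(x+3)*c)" by (simp add: algebra_simps)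
    then show ?thesis using cc by simp
  qed
  have "2*(x+3)*(2*x+1)*((x+4)*c) \<le> 2*(x+3)*(2*x+1)*(2*(2*x+5)*b)"
  proof -
    have "(x+4)*(2*x+1)*((7*x+9)*b + 2*(2*x+3)*a)
        = (x+4)*(2*x+1)*(7*x+9)*b + 2*(2*x+3)*(x+4)*(2*(2*x+1)*a)/2"
      by (simp add: algebra_simps)
    also have "\<dots> \<le> (x+4)*(2*x+1)*(7*x+9)*b + 2*(2*x+3)*(x+4)*((x+2)*b)/2"
      using m by linarith
    also have "\<dots> = 2*(x+3)*(2*x+1)*(2*(2*x+5)*b) - 21*x*b"
      by (simp add: algebra_simps)
    also have "\<dots> \<le> 2*(x+3)*(2*x+1)*(2*(2*x+5)*b)"
    proof -
      have "0 < 2*(2*x+1)*a" using apos x by simp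
      then have "0 < (x+2)*b" using h1 by linarith
      then have "b \<ge> 0" using x by (simp add: zero_less_mult_iff)
      then show ?thesis using x by simp
    qed
    finally show ?thesis unfolding e .
  qed
  moreover have "2*(x+3)*(2*x+1) > 0" using x by simp
  ultimately show "(x+4)*c \<le> 2*(2*x+5)*b" using mult_le_cancel_left_pos by blast
qed

lemma fine_bounds:
  assumes "n \<ge> 3"
  shows "fine n > 0 \<and> 2*(2*real n+1)*fine n \<le> (real n+2)*fine (n+1)
         \<and> (real n+3)*fine (n+1) \<le> 2*(2*real n+3)*fine n"
  using assms
proof (induction n rule: dec_induct)
  case base
  have "fine 3 = 2" "fine 4 = 6"
    by (simp_all add: numeral_eq_Suc)
  then show ?case by simp
next
  case (step n)
  let ?x = "real n"
  have c: "fine (Suc n + 1) = ((7*?x+9)*fine (n+1) + 2*(2*?x+3)*fine n) / (2*(?x+3))"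
    by (simp add: field_simps)
  have s: "2*(2*?x+3)*fine (n+1) \<le> (?x+3)*fine (Suc n + 1)"
          "(?x+4)*fine (Suc n + 1) \<le> 2*(2*?x+5)*fine (n+1)"
    using step_alg[OF _ _ _ _ c] step.IH by auto
  have pos: "fine (n+1) > 0"
  proof -
    have "2*(2*?x+1)*fine n > 0" using step.IH by simp
    then have "(?x+2)*fine (n+1) > 0" using step.IH by linarith
    then show ?thesis by (simp add: zero_less_mult_iff)
  qed
  show ?case using s pos by (simp add: algebra_simps)
qed

theorem corollary3p2:
  fixes k :: nat
  assumes "k \<ge> 3"
  shows "fine (k - 1) * fine (k + 1) \<ge> (fine k)^2"
proof (cases "k = 3")
  case True
  have "fine 2 = 1" "fine 3 = 2" "fine 4 = 6" by (simp_all add: numeral_eq_Suc)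
  then show ?thesis using True by simp
next
  case False
  then obtain n where n: "k = Suc n" "n \<ge> 3" using assms by (cases k) auto
  have A: "fine n > 0" "(real n+3)*fine (n+1) \<le> 2*(2*real n+3)*fine n"
    using fine_bounds[OF n(2)] by auto
  have B: "2*(2*real (Suc n)+1)*fine (Suc n) \<le> (real (Suc n)+2)*fine (Suc n+1)"
    using fine_bounds[of "Suc n"] n by auto
  have p: "fine (n+1) > 0" using fine_bounds[of "Suc n"] n by auto
  define a where "a = fine n"
  define b where "b = fine (n+1)"
  define c where "c = fine (n+2)"
  have B': "2*(2*real n+3)*b \<le> (real n+3)*c" using B unfolding b_def c_def
    by (simp add: algebra_simps)
  have A': "(real n+3)*b \<le> 2*(2*real n+3)*a" using A unfolding a_def b_def by simp
  have "(real n+3)*(b*b) \<le> (2*(2*real n+3)*a)*b"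
    using mult_right_mono[OF A', of b] p unfolding b_def by (simp add: algebra_simps)
  also have "\<dots> = a*(2*(2*real n+3)*b)" by (simp add: algebra_simps)
  also have "\<dots> \<le> a*((real n+3)*c)"
    using mult_left_mono[OF B', of a] A unfolding a_def by simp
  finally have "(real n+3)*(b*b) \<le> (real n+3)*(a*c)" by (simp add: algebra_simps)
  then have "b*b \<le> a*c" by (smt (verit) mult_le_cancel_left of_nat_0_le_iff)
  then show ?thesis using n unfolding a_def b_def c_def by (simp add: power2_eq_square)
qed

end
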